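(* In the setting where $\alpha\in(0,1)$ and $\lambda_1,\dots,\lambda_r\in\mathbb{C}$ are distinct with multiplicities $n_1,\dots,n_r\ge1$, consider $$({}^LD^\alpha-\lambda_1)^{n_1}\circ\cdots\circ({}^LD^\alpha-\lambda_r)^{n_r}x(t)=\sum_{j=0}^J\beta_jt^j\mathcal{E}_\alpha^{(j)}(\mu t),$$ with $\beta_j,\mu\in\mathbb{C}$, $J\ge0$, and any initial values $x(0),{}^LD^\alpha x(0),\dots,{}^LD^{(m-1)\circ\alpha}x(0)$, $m=n_1+\dots+n_r$. If $\mu\neq\lambda_l$ for all $l$, the solution $x$ lies in the span of $\mathcal{B}\cup\{t^j\mathcal{E}_\alpha^{(j)}(\mu t):j=0,\dots,J\}$. If $\mu=\lambda_{l_0}$ for some $l_0$, then $x$ lies in the span of $\big(\bigcup_{l\neq l_0}\mathcal{B}_{\lambda_l,n_l}\big)\cup\{t^k\mathcal{E}_\alpha^{(k)}(\lambda_{l_0}t):k=0,\dots,J+n_{l_0}\}$.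
   Context: $\mathcal{E}_\alpha(s)=\sum_{n=0}^\infty\frac{s^n}{\Gamma(2-\alpha)^n\prod_{j=1}^n\frac{\Gamma(j+1)}{\Gamma(j+1-\alpha)}}$ (entire), $\mathcal{E}_\alpha^{(k)}$ its $k$-th ordinary derivative. $\mathcal{B}_{\lambda_l,n_l}=\{t^k\mathcal{E}_\alpha^{(k)}(\lambda_lt):k=0,\dots,n_l-1\}$ and $\mathcal{B}=\bigcup_l\mathcal{B}_{\lambda_l,n_l}$. Solutions are taken among functions on $[0,\infty)$ given by everywhere convergent power series, with the equation holding for all $t\ge0$. ${}^LD^\alpha x(t)=\frac{\Gamma(2-\alpha)}{t^{1-\alpha}}\cdot\frac{1}{\Gamma(1-\alpha)}\int_0^t (t-\tau)^{-\alpha}x'(\tau)d\tau$ for $t>0$, acting termwise on power series: ${}^LD^\alpha\sum_nx_nt^n=\sum_nx_{n+1}\frac{\Gamma(n+2)\Gamma(2-\alpha)}{\Gamma(n+2-\alpha)}t^n$ (also defining the value at $t=0$). ${}^LD^{k\circ\alpha}$ and $({}^LD^\alpha-\lambda)^k$ denote $k$-fold compositions. *)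

theory Defs
  imports "HOL-Analysis.Analysis"
begin

definition Ecoef :: "real \<Rightarrow> nat \<Rightarrow> real" where
  "Ecoef \<alpha> n = 1 / (Gamma (2 - \<alpha>) ^ n *
      (\<Prod>j\<in>{1..n}. Gamma (real j + 1) / Gamma (real j + 1 - \<alpha>)))"

definition Ealpha :: "real \<Rightarrow> complex \<Rightarrow> complex" where
  "Ealpha \<alpha> s = (\<Sum>n. complex_of_real (Ecoef \<alpha> n) * s ^ n)"

definition Ealpha_deriv :: "real \<Rightarrow> nat \<Rightarrow> complex \<Rightarrow> complex" where
  "Ealpha_deriv \<alpha> k = (deriv ^^ k) (Ealpha \<alpha>)"

text \<open>Functions on [0,oo) given by everywhere convergent power series,
  represented by their coefficient sequence.\<close>
definition ps_fun :: "(nat \<Rightarrow> complex) \<Rightarrow> real \<Rightarrow> complex" where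
  "ps_fun c t = (\<Sum>n. c n * complex_of_real t ^ n)"

definition ps_conv :: "(nat \<Rightarrow> complex) \<Rightarrow> bool" where
  "ps_conv c \<longleftrightarrow> (\<forall>t\<ge>0. summable (\<lambda>n. c n * complex_of_real t ^ n))"

definition LD :: "real \<Rightarrow> (nat \<Rightarrow> complex) \<Rightarrow> (nat \<Rightarrow> complex)" where
  "LD \<alpha> c n = c (Suc n) *
     complex_of_real (Gamma (real n + 2) * Gamma (2 - \<alpha>) / Gamma (real n + 2 - \<alpha>))"

definition LD_shift :: "real \<Rightarrow> complex \<Rightarrow> (nat \<Rightarrow> complex) \<Rightarrow> (nat \<Rightarrow> complex)" where
  "LD_shift \<alpha> z c = (\<lambda>n. LD \<alpha> c n - z * c n)"

definition LD_poly :: "real \<Rightarrow> (nat \<Rightarrow> complex) \<Rightarrow> (nat \<Rightarrow> nat) \<Rightarrow> nat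
    \<Rightarrow> (nat \<Rightarrow> complex) \<Rightarrow> (nat \<Rightarrow> complex)" where
  "LD_poly \<alpha> lam mul r =
     foldr (\<lambda>l acc. (LD_shift \<alpha> (lam l) ^^ mul l) \<circ> acc) [0..<r] id"

end

theory Submission
  imports Defs
begin


definition SS :: "complex \<Rightarrow> (nat \<Rightarrow> complex) \<Rightarrow> nat \<Rightarrow> complex" where
  "SS z d n = d (Suc n) - z * d n"

definition phi :: "nat \<Rightarrow> complex \<Rightarrow> nat \<Rightarrow> complex" where
  "phi k v n = of_nat (fact k * (n choose k)) * v ^ (n - k)"

definition InSp :: "complex set \<Rightarrow> (complex \<Rightarrow> nat) \<Rightarrow> (nat \<Rightarrow> complex) \<Rightarrow> bool" where
  "InSp S M d \<longleftrightarrow> (\<exists>A. d = (\<lambda>n. \<Sum>v\<in>S. \<Sum>k<M v. A v k * phi k v n))"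

lemma SS_phi_same: "SS v (phi (Suc k) v) n = of_nat (Suc k) * phi k v n"
proof (cases "n \<le> k")
  case True
  then show ?thesis
  proof (cases "n = k")
    case True then show ?thesis by (simp add: SS_def phi_def binomial_eq_0 algebra_simps)
  next
    case False with \<open>n \<le> k\<close> show ?thesis by (simp add: SS_def phi_def binomial_eq_0)
  qed
next
  case False
  then have e: "n - k = Suc (n - Suc k)" by simp
  have "SS v (phi (Suc k) v) n = of_nat (fact (Suc k) * (n choose k)) * v ^ (n - k)"
    unfolding SS_def phi_def
    by (simp add: e algebra_simps)
  also have "\<dots> = of_nat (Suc k) * phi k v n" unfolding phi_def fact_Suc of_nat_mult by (simp add: algebra_simps)
  finally show ?thesis .
qed

lemma SS_phi0: "SS v (phi 0 v) n = 0"
  by (simp add: SS_def phi_def)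

lemma SS_change: "SS w f n = SS v f n + (v - w) * f n"
  by (simp add: SS_def algebra_simps)

lemma SS_phi_other: "SS w (phi k v) n = (v - w) * phi k v n + of_nat k * phi (k - 1) v n"
proof (cases k)
  case 0 then show ?thesis by (simp add: SS_change[of w _ n v] SS_phi0)
next
  case (Suc j) then show ?thesis by (simp add: SS_change[of w _ n v] SS_phi_same)
qed

lemma SS_scale: "SS w (\<lambda>n. c * f n) = (\<lambda>n. c * SS w f n)"
  by (auto simp: SS_def algebra_simps)
lemma SS_add: "SS w (\<lambda>n. f n + g n) = (\<lambda>n. SS w f n + SS w g n)"
  by (auto simp: SS_def algebra_simps)
lemma SS_diff: "SS w (\<lambda>n. f n - g n) = (\<lambda>n. SS w f n - SS w g n)"
  by (auto simp: SS_def algebra_simps)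
lemma SS_sum: "SS w (\<lambda>n. \<Sum>i\<in>I. F i n) = (\<lambda>n. \<Sum>i\<in>I. SS w (F i) n)"
  by (auto simp: SS_def sum_subtractf sum_distrib_left)

lemma SS_kernel:
  assumes "\<And>n. SS w d n = 0"
  shows "d = (\<lambda>n. d 0 * phi 0 w n)"
proof
  fix n show "d n = d 0 * phi 0 w n"
    using assms by (induction n) (auto simp: phi_def SS_def algebra_simps)
qed

lemma InSp_add: "InSp S M f \<Longrightarrow> InSp S M g \<Longrightarrow> InSp S M (\<lambda>n. f n + g n)"
  unfolding InSp_def
proof (elim exE)
  fix A B assume "f = (\<lambda>n. \<Sum>v\<in>S. \<Sum>k<M v. A v k * phi k v n)" "g = (\<lambda>n. \<Sum>v\<in>S. \<Sum>k<M v. B v k * phi k v n)"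
  then show "\<exists>C. (\<lambda>n. f n + g n) = (\<lambda>n. \<Sum>v\<in>S. \<Sum>k<M v. C v k * phi k v n)"
    by (intro exI[of _ "\<lambda>v k. A v k + B v k"]) (simp add: sum.distrib algebra_simps)
qed

lemma InSp_scale: "InSp S M f \<Longrightarrow> InSp S M (\<lambda>n. c * f n)"
  unfolding InSp_def
proof (elim exE)
  fix A assume "f = (\<lambda>n. \<Sum>v\<in>S. \<Sum>k<M v. A v k * phi k v n)"
  then show "\<exists>C. (\<lambda>n. c * f n) = (\<lambda>n. \<Sum>v\<in>S. \<Sum>k<M v. C v k * phi k v n)"
    by (intro exI[of _ "\<lambda>v k. c * A v k"]) (simp add: sum_distrib_left algebra_simps)
qed

lemma InSp_zero: "InSp S M (\<lambda>n. 0)"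
  unfolding InSp_def by (intro exI[of _ "\<lambda>v k. 0"]) simp

lemma InSp_sum: "finite I \<Longrightarrow> (\<And>i. i \<in> I \<Longrightarrow> InSp S M (F i)) \<Longrightarrow> InSp S M (\<lambda>n. \<Sum>i\<in>I. F i n)"
proof (induction I rule: finite_induct)
  case empty then show ?case by (simp add: InSp_zero)
next
  case (insert x F) then show ?case by (simp add: InSp_add)
qed

lemma InSp_gen: assumes "finite S" "v \<in> S" "k < M v" shows "InSp S M (phi k v)"
  unfolding InSp_def
proof (intro exI[of _ "\<lambda>v' k'. if v' = v \<and> k' = k then 1 else 0"] ext)
  fix n
  have "(\<Sum>v'\<in>S. \<Sum>k'<M v'. (if v' = v \<and> k' = k then 1 else 0) * phi k' v' n)
      = (\<Sum>v'\<in>S. if v' = v then phi k v n else 0)"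
  proof (rule sum.cong[OF refl])
    fix v' assume "v' \<in> S"
    show "(\<Sum>k'<M v'. (if v' = v \<and> k' = k then 1 else 0) * phi k' v' n) = (if v' = v then phi k v n else 0)"
    proof (cases "v' = v")
      case True
      have "(\<Sum>k'<M v. (if k' = k then 1 else 0) * phi k' v n) = (\<Sum>k'<M v. if k' = k then phi k v n else 0)"
        by (rule sum.cong) auto
      then show ?thesis using True assms(3) by simp
    qed simp
  qed
  also have "\<dots> = phi k v n" using assms by simp
  finally show "phi k v n = (\<Sum>v'\<in>S. \<Sum>k'<M v'. (if v' = v \<and> k' = k then 1 else 0) * phi k' v' n)" by simp
qed

lemma InSp_mono: assumes "\<And>v. M v \<le> M' v" "InSp S M d" shows "InSp S M' d"
proof -
  obtain A where A: "d = (\<lambda>n. \<Sum>v\<in>S. \<Sum>k<M v. A v k * phi k v n)" using assms(2) InSp_def by blast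
  show ?thesis unfolding InSp_def
  proof (intro exI[of _ "\<lambda>v k. if k < M v then A v k else 0"] ext)
    fix n
    have "(\<Sum>k<M' v. (if k < M v then A v k else 0) * phi k v n) = (\<Sum>k<M v. A v k * phi k v n)" for v
    proof -
      have "(\<Sum>k<M' v. (if k < M v then A v k else 0) * phi k v n) = (\<Sum>k<M v. (if k < M v then A v k else 0) * phi k v n)"
        using assms(1)[of v] by (intro sum.mono_neutral_right) auto
      then show ?thesis by simp
    qed
    then show "d n = (\<Sum>v\<in>S. \<Sum>k<M' v. (if k < M v then A v k else 0) * phi k v n)" by (simp add: A)
  qed
qed

lemma preimage_other:
  assumes "finite S" "v \<in> S" "v \<noteq> w"
  shows "k < M v \<Longrightarrow> \<exists>f. InSp S M f \<and> SS w f = phi k v"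
proof (induction k)
  case 0
  show ?case
  proof (intro exI conjI ext)
    show "InSp S M (\<lambda>n. inverse (v - w) * phi 0 v n)" using 0 assms by (intro InSp_scale InSp_gen) auto
    fix n show "SS w (\<lambda>n. inverse (v - w) * phi 0 v n) n = phi 0 v n"
      using assms by (simp add: SS_scale SS_phi_other)
  qed
next
  case (Suc k)
  then obtain f where f: "InSp S M f" "SS w f = phi k v" by auto
  show ?case
  proof (intro exI conjI ext)
    show "InSp S M (\<lambda>n. inverse (v - w) * (phi (Suc k) v n + (- of_nat (Suc k)) * f n))"
      using Suc assms f by (intro InSp_scale InSp_add InSp_gen) auto
    fix n show "SS w (\<lambda>n. inverse (v - w) * (phi (Suc k) v n + (- of_nat (Suc k)) * f n)) n = phi (Suc k) v n"
    proof -
      have "SS w f n = phi k v n" using f(2) by simp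
      moreover have "v - w \<noteq> 0" using assms by simp
      ultimately show ?thesis unfolding SS_scale SS_add
        by (simp add: SS_phi_other field_simps)
    qed
  qed
qed

lemma key_step:
  assumes S: "finite S" "w \<in> S" and d: "InSp S M (SS w d)"
  shows "InSp S (M(w := Suc (M w))) d"
proof -
  let ?M' = "M(w := Suc (M w))"
  have Mle: "M v \<le> ?M' v" for v by simp
  obtain A where A: "SS w d = (\<lambda>n. \<Sum>v\<in>S. \<Sum>k<M v. A v k * phi k v n)" using d InSp_def by blast
  have "\<forall>v k. v \<in> S \<and> k < M v \<longrightarrow> (\<exists>f. InSp S ?M' f \<and> SS w f = phi k v)"
  proof (intro allI impI)
    fix v k assume vk: "v \<in> S \<and> k < M v"
    show "\<exists>f. InSp S ?M' f \<and> SS w f = phi k v"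
    proof (cases "v = w")
      case True
      show ?thesis
      proof (intro exI conjI ext)
        show "InSp S ?M' (\<lambda>n. inverse (of_nat (Suc k)) * phi (Suc k) w n)"
          using vk True S by (intro InSp_scale InSp_gen) auto
        fix n show "SS w (\<lambda>n. inverse (of_nat (Suc k)) * phi (Suc k) w n) n = phi k v n"
          using True by (simp add: SS_scale SS_phi_same del: of_nat_Suc)
      qed
    next
      case False
      then obtain f where "InSp S M f" "SS w f = phi k v" using preimage_other[OF S(1) _ False] vk by blast
      then show ?thesis using InSp_mono[of M ?M' S f] Mle by blast
    qed
  qed
  define F where "F v k = (SOME f. InSp S ?M' f \<and> SS w f = phi k v)" for v k
  have F: "InSp S ?M' (F v k) \<and> SS w (F v k) = phi k v" if "v \<in> S" "k < M v" for v k
  proof -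
    have ex: "\<exists>f. InSp S ?M' f \<and> SS w f = phi k v" using that \<open>\<forall>v k. _\<close> by blast
    show ?thesis unfolding F_def by (rule someI_ex[OF ex])
  qed
  define W where "W = (\<lambda>n. \<Sum>v\<in>S. \<Sum>k<M v. A v k * F v k n)"
  have W: "InSp S ?M' W" unfolding W_def using F S
    by (intro InSp_sum InSp_scale) auto
  have SW: "SS w W = SS w d"
    unfolding W_def A SS_sum SS_scale using F by (auto intro!: sum.cong)
  have "SS w (\<lambda>n. d n - W n) n = 0" for n using SW by (simp add: SS_diff)
  from SS_kernel[OF this] have "(\<lambda>n. d n - W n) = (\<lambda>n. (d 0 - W 0) * phi 0 w n)" by simp
  then have "d = (\<lambda>n. W n + (d 0 - W 0) * phi 0 w n)"
  proof -
    assume h: "(\<lambda>n. d n - W n) = (\<lambda>n. (d 0 - W 0) * phi 0 w n)"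
    show ?thesis
    proof
      fix n from fun_cong[OF h, of n] show "d n = W n + (d 0 - W 0) * phi 0 w n" by (simp add: algebra_simps)
    qed
  qed
  moreover have "InSp S ?M' (\<lambda>n. W n + (d 0 - W 0) * phi 0 w n)"
    using W S by (intro InSp_add InSp_scale InSp_gen) auto
  ultimately show ?thesis by simp
qed

lemma key_pow:
  assumes S: "finite S" "w \<in> S"
  shows "InSp S M ((SS w ^^ m) d) \<Longrightarrow> InSp S (M(w := M w + m)) d"
proof (induction m arbitrary: d)
  case 0 then show ?case by (simp only: funpow_0 add_0_right fun_upd_triv id_apply)
next
  case (Suc m)
  have eq: "(SS w ^^ Suc m) d = (SS w ^^ m) (SS w d)" by (simp only: funpow_Suc_right o_apply)
  from Suc.prems have "InSp S M ((SS w ^^ m) (SS w d))" by (simp only: eq)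
  then have "InSp S (M(w := M w + m)) (SS w d)" by (rule Suc.IH)
  from key_step[OF S this] show ?case by (simp only: fun_upd_upd fun_upd_same add_Suc_right)
qed

definition PP :: "(nat \<Rightarrow> complex) \<Rightarrow> (nat \<Rightarrow> nat) \<Rightarrow> nat list \<Rightarrow> (nat \<Rightarrow> complex) \<Rightarrow> (nat \<Rightarrow> complex)" where
  "PP lam mul xs = foldr (\<lambda>l acc. (SS (lam l) ^^ mul l) \<circ> acc) xs id"

lemma key_list:
  assumes "finite S" "\<forall>l\<in>set xs. lam l \<in> S"
  shows "InSp S M (PP lam mul xs d) \<Longrightarrow>
     InSp S (\<lambda>v. M v + sum_list (map (\<lambda>l. if lam l = v then mul l else 0) xs)) d"
  using assms(2)
proof (induction xs arbitrary: M)
  case Nil then show ?case by (simp add: PP_def)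
next
  case (Cons x xs)
  have h1: "InSp S (M(lam x := M (lam x) + mul x)) (PP lam mul xs d)"
    using Cons.prems key_pow[OF assms(1), of "lam x" M "mul x"] by (simp add: PP_def)
  then have "InSp S (\<lambda>v. (M(lam x := M (lam x) + mul x)) v + sum_list (map (\<lambda>l. if lam l = v then mul l else 0) xs)) d"
    using Cons.IH[OF h1] Cons.prems by simp
  moreover have "(\<lambda>v. (M(lam x := M (lam x) + mul x)) v + sum_list (map (\<lambda>l. if lam l = v then mul l else 0) xs))
     = (\<lambda>v. M v + sum_list (map (\<lambda>l. if lam l = v then mul l else 0) (x # xs)))"
    by (auto simp: fun_eq_iff)
  ultimately show ?case by simp
qed



definition gg :: "real \<Rightarrow> nat \<Rightarrow> real" where
  "gg \<alpha> n = Gamma (real n + 2) * Gamma (2 - \<alpha>) / Gamma (real n + 2 - \<alpha>)"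

definition entire :: "(nat \<Rightarrow> complex) \<Rightarrow> bool" where
  "entire c \<longleftrightarrow> (\<forall>z. summable (\<lambda>n. c n * z ^ n))"

lemma Gamma_plus1_pos: "(x::real) > 0 \<Longrightarrow> Gamma (x + 1) = x * Gamma x"
  by (rule Gamma_plus1) (auto dest: nonpos_Ints_nonpos)

context
  fixes \<alpha> :: real
  assumes a0: "0 < \<alpha>" and a1: "\<alpha> < 1"
begin

lemma Ecoef_pos: "Ecoef \<alpha> n > 0"
  unfolding Ecoef_def using a0 a1
  by (intro divide_pos_pos mult_pos_pos zero_less_power prod_pos) auto

lemma Ecoef_Suc: "Ecoef \<alpha> (Suc n) * gg \<alpha> n = Ecoef \<alpha> n"
proof -
  define G where "G = Gamma (2 - \<alpha>)"
  define R where "R = Gamma (real n + 2) / Gamma (real n + 2 - \<alpha>)"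
  define P where "P = (\<Prod>j\<in>{1..n}. Gamma (real j + 1) / Gamma (real j + 1 - \<alpha>))"
  have G: "G > 0" "R > 0" unfolding G_def R_def using a0 a1 by auto
  have P: "P > 0" unfolding P_def
    using a1 by (intro prod_pos) auto
  have "(\<Prod>j\<in>{1..Suc n}. Gamma (real j + 1) / Gamma (real j + 1 - \<alpha>)) = R * P"
    unfolding R_def P_def by (subst prod.nat_ivl_Suc') (auto simp: add_ac)
  then have E1: "Ecoef \<alpha> (Suc n) = 1 / (G ^ Suc n * (R * P))" unfolding Ecoef_def G_def by simp
  have E0: "Ecoef \<alpha> n = 1 / (G ^ n * P)" unfolding Ecoef_def G_def P_def by simp
  have g: "gg \<alpha> n = R * G" unfolding gg_def R_def G_def by simp
  show ?thesis unfolding E1 E0 g using G P by (simp add: field_simps)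
qed

lemma gg_0: "gg \<alpha> 0 = 1"
proof -
  have "Gamma (2::real) = 1" using Gamma_numeral[of "num.Bit0 num.One"] by simp
  moreover have "Gamma (2 - \<alpha>) > 0" using a1 by auto
  ultimately show ?thesis unfolding gg_def by simp
qed

lemma gg_Suc: "gg \<alpha> (Suc n) = gg \<alpha> n * ((real n + 2) / (real n + 2 - \<alpha>))"
proof -
  have "Gamma (real (Suc n) + 2) = (real n + 2) * Gamma (real n + 2)"
    using Gamma_plus1_pos[of "real n + 2"] by (simp add: add_ac)
  moreover have "Gamma (real (Suc n) + 2 - \<alpha>) = (real n + 2 - \<alpha>) * Gamma (real n + 2 - \<alpha>)"
    using Gamma_plus1_pos[of "real n + 2 - \<alpha>"] a1 by (simp add: algebra_simps)
  moreover have "Gamma (real n + 2 - \<alpha>) > 0" "real n + 2 - \<alpha> > 0" using a1 by auto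
  ultimately show ?thesis unfolding gg_def by (simp add: field_simps)
qed

lemma gg_bounds: "1 \<le> gg \<alpha> n \<and> gg \<alpha> n \<le> real n + 1"
proof (induction n)
  case 0 then show ?case by (simp add: gg_0)
next
  case (Suc n)
  have pos: "real n + 2 - \<alpha> > 0" using a1 by simp
  have q1: "(real n + 2) / (real n + 2 - \<alpha>) \<ge> 1" using a0 pos by (simp add: le_divide_eq)
  have q3: "(real n + 1) / (real n + 2 - \<alpha>) \<le> 1" using a1 pos by (simp add: divide_le_eq)
  have q2: "(real n + 1) * ((real n + 2) / (real n + 2 - \<alpha>)) \<le> real n + 2"
  proof -
    have "(real n + 1) * ((real n + 2) / (real n + 2 - \<alpha>)) = (real n + 2) * ((real n + 1) / (real n + 2 - \<alpha>))"
      by (simp only: times_divide_eq_right mult.commute)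
    also have "\<dots> \<le> (real n + 2) * 1" using q3 by (intro mult_left_mono) auto
    finally show ?thesis by simp
  qed
  have "gg \<alpha> n * 1 \<le> gg \<alpha> n * ((real n + 2) / (real n + 2 - \<alpha>))"
    using Suc q1 by (intro mult_left_mono) auto
  then have "gg \<alpha> (Suc n) \<ge> gg \<alpha> n" unfolding gg_Suc by simp
  moreover have "gg \<alpha> (Suc n) \<le> (real n + 1) * ((real n + 2) / (real n + 2 - \<alpha>))"
    unfolding gg_Suc using Suc q1 by (intro mult_right_mono) auto
  ultimately show ?case using Suc q2 by simp
qed

lemma gg_lower: "gg \<alpha> n \<ge> 1 + \<alpha> * (harm (Suc n) - 1)"
proof (induction n)
  case 0 then show ?case by (simp add: gg_0 harm_def)
next
  case (Suc n)
  have g1: "gg \<alpha> n \<ge> 1" using gg_bounds by blast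
  have pos: "real n + 2 - \<alpha> > 0" using a1 by simp
  have "gg \<alpha> (Suc n) = gg \<alpha> n + gg \<alpha> n * (\<alpha> / (real n + 2 - \<alpha>))"
    unfolding gg_Suc using pos by (simp add: field_simps)
  moreover have "gg \<alpha> n * (\<alpha> / (real n + 2 - \<alpha>)) \<ge> \<alpha> / (real n + 2 - \<alpha>)"
  proof -
    have "1 * (\<alpha> / (real n + 2 - \<alpha>)) \<le> gg \<alpha> n * (\<alpha> / (real n + 2 - \<alpha>))"
      using g1 a0 pos by (intro mult_right_mono) auto
    then show ?thesis by simp
  qed
  moreover have "\<alpha> / (real n + 2 - \<alpha>) \<ge> \<alpha> / (real n + 2)"
    using a0 pos by (intro divide_left_mono) auto
  moreover have "\<alpha> * harm (Suc (Suc n)) = \<alpha> * harm (Suc n) + \<alpha> / (real n + 2)"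
  proof -
    have "real (Suc (Suc n)) = real n + 2" by simp
    then show ?thesis unfolding harm_Suc[of "Suc n"] by (simp add: distrib_left divide_inverse)
  qed
  ultimately show ?case using Suc a0 by (simp only: right_diff_distrib)
qed

lemma gg_large: "\<exists>N. \<forall>n\<ge>N. gg \<alpha> n \<ge> B"
proof -
  define N where "N = nat \<lceil>exp ((\<bar>B\<bar> + 1) / \<alpha> + 1)\<rceil>"
  show ?thesis
  proof (intro exI allI impI)
    fix n assume "N \<le> n"
    have "exp ((\<bar>B\<bar> + 1) / \<alpha> + 1) \<le> real N" unfolding N_def by (rule real_nat_ceiling_ge)
    moreover have "real N \<le> real n" using \<open>N \<le> n\<close> by simp
    ultimately have "exp ((\<bar>B\<bar> + 1) / \<alpha> + 1) \<le> real n + 2" by linarith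
    then have "(\<bar>B\<bar> + 1) / \<alpha> + 1 \<le> ln (real n + 2)"
      using ln_le_cancel_iff[of "exp ((\<bar>B\<bar> + 1) / \<alpha> + 1)" "real n + 2"] by simp
    moreover have "ln (real n + 2) \<le> harm (Suc n)" using harm_ge_ln[of "Suc n"] by (simp add: add_ac)
    ultimately have "(\<bar>B\<bar> + 1) / \<alpha> \<le> harm (Suc n) - 1" by simp
    then have "\<bar>B\<bar> + 1 \<le> \<alpha> * (harm (Suc n) - 1)" using a0 by (simp add: field_simps)
    then show "gg \<alpha> n \<ge> B" using gg_lower[of n] by linarith
  qed
qed

lemma entire_E: "entire (\<lambda>n. complex_of_real (Ecoef \<alpha> n))"
  unfolding entire_def
proof
  fix z :: complex
  obtain N where N: "\<And>n. n \<ge> N \<Longrightarrow> gg \<alpha> n \<ge> 2 * norm z" using gg_large by blast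
  show "summable (\<lambda>n. complex_of_real (Ecoef \<alpha> n) * z ^ n)"
  proof (rule summable_ratio_test[of "1/2" N])
    fix n assume "n \<ge> N"
    then have g: "gg \<alpha> n \<ge> 2 * norm z" by (rule N)
    have gp: "gg \<alpha> n > 0" using gg_bounds[of n] by linarith
    have E: "Ecoef \<alpha> (Suc n) = Ecoef \<alpha> n / gg \<alpha> n" using Ecoef_Suc[of n] gp by (simp add: field_simps)
    have "norm (complex_of_real (Ecoef \<alpha> (Suc n)) * z ^ Suc n) = Ecoef \<alpha> (Suc n) * norm z ^ Suc n"
      using Ecoef_pos[of "Suc n"] by (simp add: norm_mult norm_power)
    also have "\<dots> = Ecoef \<alpha> n * norm z ^ n * (norm z / gg \<alpha> n)"
      unfolding E by simp
    also have "\<dots> \<le> Ecoef \<alpha> n * norm z ^ n * (1/2)"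
      using g gp Ecoef_pos[of n] by (intro mult_left_mono) (auto simp: field_simps)
    also have "\<dots> = 1/2 * norm (complex_of_real (Ecoef \<alpha> n) * z ^ n)"
      using Ecoef_pos[of n] by (simp add: norm_mult norm_power)
    finally show "norm (complex_of_real (Ecoef \<alpha> (Suc n)) * z ^ Suc n) \<le> 1/2 * norm (complex_of_real (Ecoef \<alpha> n) * z ^ n)" .
  qed simp
qed

lemma LD_gg: "LD \<alpha> c n = c (Suc n) * complex_of_real (gg \<alpha> n)"
  unfolding LD_def gg_def by simp

lemma LD_conj: "LD \<alpha> (\<lambda>n. complex_of_real (Ecoef \<alpha> n) * d n) = (\<lambda>n. complex_of_real (Ecoef \<alpha> n) * d (Suc n))"
proof
  fix n
  have "complex_of_real (Ecoef \<alpha> (Suc n)) * complex_of_real (gg \<alpha> n) = complex_of_real (Ecoef \<alpha> n)"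
    by (metis Ecoef_Suc of_real_mult)
  then show "LD \<alpha> (\<lambda>n. complex_of_real (Ecoef \<alpha> n) * d n) n = complex_of_real (Ecoef \<alpha> n) * d (Suc n)"
    unfolding LD_gg by (simp add: algebra_simps)
qed

lemma LD_shift_conj: "LD_shift \<alpha> z (\<lambda>n. complex_of_real (Ecoef \<alpha> n) * d n) = (\<lambda>n. complex_of_real (Ecoef \<alpha> n) * SS z d n)"
  unfolding LD_shift_def LD_conj SS_def by (simp add: algebra_simps)

lemma LD_pow_conj: "(LD_shift \<alpha> z ^^ m) (\<lambda>n. complex_of_real (Ecoef \<alpha> n) * d n) = (\<lambda>n. complex_of_real (Ecoef \<alpha> n) * (SS z ^^ m) d n)"
  by (induction m) (simp_all add: LD_shift_conj)

lemma LD_foldr_conj: "foldr (\<lambda>l acc. (LD_shift \<alpha> (lam l) ^^ mul l) \<circ> acc) xs id (\<lambda>n. complex_of_real (Ecoef \<alpha> n) * d n)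
   = (\<lambda>n. complex_of_real (Ecoef \<alpha> n) * PP lam mul xs d n)"
  by (induction xs) (simp_all add: PP_def LD_pow_conj)

lemma entire_LD: assumes "entire c" shows "entire (LD \<alpha> c)"
  unfolding entire_def
proof
  fix z :: complex
  have s: "summable (\<lambda>n. diffs c n * x ^ n)" for x
    using assms unfolding entire_def by (intro termdiff_converges_all) auto
  have "summable (\<lambda>n. norm (diffs c n * z ^ n))"
    by (rule powser_insidea[OF s[of "of_real (norm z + 1)"]]) simp
  then show "summable (\<lambda>n. LD \<alpha> c n * z ^ n)"
  proof (rule summable_comparison_test'[where N=0])
    fix n
    have "gg \<alpha> n \<le> real n + 1" "gg \<alpha> n \<ge> 0" using gg_bounds[of n] by auto
    have "norm (LD \<alpha> c n * z ^ n) = norm (c (Suc n)) * gg \<alpha> n * norm z ^ n"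
      unfolding LD_gg using \<open>gg \<alpha> n \<ge> 0\<close> by (simp add: norm_mult norm_power)
    also have "\<dots> \<le> norm (c (Suc n)) * (real n + 1) * norm z ^ n"
      using \<open>gg \<alpha> n \<le> real n + 1\<close> by (intro mult_right_mono mult_left_mono) auto
    also have "\<dots> = norm (diffs c n * z ^ n)"
    proof -
      have "norm (of_nat (Suc n) :: complex) = real n + 1" using norm_of_nat[where 'a=complex, of "Suc n"] by (simp add: add.commute)
      then show ?thesis by (simp add: diffs_def norm_mult norm_power del: of_nat_Suc)
    qed
    finally show "norm (LD \<alpha> c n * z ^ n) \<le> norm (diffs c n * z ^ n)" .
  qed
qed

lemma entire_LD_shift: assumes "entire c" shows "entire (LD_shift \<alpha> w c)"
  unfolding entire_def
proof
  fix x :: complex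
  have "(\<lambda>n. LD_shift \<alpha> w c n * x ^ n) = (\<lambda>n. LD \<alpha> c n * x^n - w * (c n * x^n))"
    by (simp add: LD_shift_def algebra_simps)
  moreover have "summable (\<lambda>n. LD \<alpha> c n * x^n - w * (c n * x^n))"
    using entire_LD[OF assms] assms unfolding entire_def by (intro summable_diff summable_mult) auto
  ultimately show "summable (\<lambda>n. LD_shift \<alpha> w c n * x ^ n)" by simp
qed

lemma entire_LD_pow: "entire c \<Longrightarrow> entire ((LD_shift \<alpha> w ^^ m) c)"
  by (induction m) (simp_all add: entire_LD_shift)

lemma entire_LD_foldr: "entire c \<Longrightarrow> entire (foldr (\<lambda>l acc. (LD_shift \<alpha> (lam l) ^^ mul l) \<circ> acc) xs id c)"
  by (induction xs) (simp_all add: entire_LD_pow)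

end

lemma entire_diffs: "entire c \<Longrightarrow> entire (diffs c)"
  unfolding entire_def by (intro allI termdiff_converges_all) auto

lemma deriv_funpow:
  assumes "entire c"
  shows "entire ((diffs ^^ k) c) \<and> (deriv ^^ k) (\<lambda>s. \<Sum>n. c n * s ^ n) = (\<lambda>s. \<Sum>n. (diffs ^^ k) c n * s ^ n)"
proof (induction k)
  case 0 then show ?case using assms by simp
next
  case (Suc k)
  then have e: "entire ((diffs ^^ k) c)" by blast
  have "deriv (\<lambda>s. \<Sum>n. (diffs ^^ k) c n * s ^ n) = (\<lambda>s. \<Sum>n. diffs ((diffs ^^ k) c) n * s ^ n)"
  proof
    fix s :: complex
    show "deriv (\<lambda>s. \<Sum>n. (diffs ^^ k) c n * s ^ n) s = (\<Sum>n. diffs ((diffs ^^ k) c) n * s ^ n)"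
      by (rule DERIV_imp_deriv, rule termdiffs_strong_converges_everywhere) (use e in \<open>auto simp: entire_def\<close>)
  qed
  then show ?case using Suc entire_diffs[OF e] by simp
qed

lemma diffs_funpow: "(diffs ^^ k) c n = pochhammer (of_nat (Suc n)) k * c (n + k)"
proof (induction k arbitrary: n)
  case 0 then show ?case by simp
next
  case (Suc k)
  have d: "diffs f n = of_nat (Suc n) * f (Suc n)" for f :: "nat \<Rightarrow> 'a" by (simp add: diffs_def)
  have "(diffs ^^ Suc k) c n = diffs ((diffs ^^ k) c) n" by simp
  also have "\<dots> = of_nat (Suc n) * (pochhammer (of_nat (Suc (Suc n))) k * c (Suc n + k))"
    unfolding d Suc.IH ..
  also have "\<dots> = pochhammer (of_nat (Suc n)) (Suc k) * c (n + Suc k)"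
    unfolding pochhammer_rec by (simp add: algebra_simps)
  finally show ?case .
qed

lemma poch_nat: "pochhammer (of_nat (Suc n) :: complex) k = of_nat (fact k * ((n + k) choose k))"
proof (induction k)
  case 0 then show ?case by simp
next
  case (Suc k)
  have "fact (Suc k) * ((n + Suc k) choose Suc k) = fact k * (Suc k * (Suc (n + k) choose Suc k))"
    by (simp add: algebra_simps del: binomial_Suc_Suc)
  also have "\<dots> = fact k * ((n + k) choose k) * Suc (n + k)"
    by (metis Suc_times_binomial mult.assoc mult.commute)
  finally have e: "fact (Suc k) * ((n + Suc k) choose Suc k) = fact k * ((n + k) choose k) * Suc (n + k)" .
  show ?case unfolding pochhammer_Suc Suc e of_nat_mult by simp
qed

lemma series_phi:
  assumes "entire ec" "Ed = (\<lambda>k. (deriv ^^ k) (\<lambda>s. \<Sum>n. ec n * s ^ n))"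
  shows "(\<lambda>m. ec m * phi k v m * z ^ m) sums (z ^ k * Ed k (v * z))"
proof -
  have D: "Ed k = (\<lambda>s. \<Sum>n. (diffs ^^ k) ec n * s ^ n)" "entire ((diffs ^^ k) ec)"
    using deriv_funpow[OF assms(1), of k] assms(2) by auto
  have "(\<lambda>n. (diffs ^^ k) ec n * (v * z) ^ n) sums Ed k (v * z)"
    using D by (simp add: entire_def summable_sums)
  from sums_mult[OF this, of "z ^ k"]
  have "(\<lambda>n. z ^ k * ((diffs ^^ k) ec n * (v * z) ^ n)) sums (z ^ k * Ed k (v * z))" .
  moreover have "z ^ k * ((diffs ^^ k) ec n * (v * z) ^ n) = ec (n + k) * phi k v (n + k) * z ^ (n + k)" for n
    unfolding diffs_funpow poch_nat phi_def by (simp add: power_add power_mult_distrib algebra_simps)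
  ultimately have "(\<lambda>n. ec (n + k) * phi k v (n + k) * z ^ (n + k)) sums (z ^ k * Ed k (v * z))" by simp
  then show ?thesis
    by (subst (asm) sums_zero_iff_shift[where f = "\<lambda>m. ec m * phi k v m * z ^ m"]) (auto simp: phi_def binomial_eq_0)
qed

lemma powser_unique0:
  assumes "entire a" "\<And>t. t > 0 \<Longrightarrow> (\<Sum>n. a n * complex_of_real t ^ n) = 0"
  shows "a 0 = 0"
proof -
  let ?f = "\<lambda>x. \<Sum>n. a n * x ^ n"
  have "isCont ?f 0" using assms(1) unfolding entire_def by (intro isCont_powser_converges_everywhere) auto
  moreover have T: "((\<lambda>t. complex_of_real t) \<longlongrightarrow> 0) (at_right 0)"
    using tendsto_of_real[OF tendsto_ident_at[of "0::real" "{0<..}"]] by simp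
  ultimately have "((\<lambda>t. ?f (complex_of_real t)) \<longlongrightarrow> ?f 0) (at_right 0)"
    by (rule isCont_tendsto_compose)
  moreover have "eventually (\<lambda>t. ?f (complex_of_real t) = 0) (at_right (0::real))"
    by (rule eventually_mono[OF eventually_at_right_less]) (rule assms(2))
  ultimately have "((\<lambda>t. 0) \<longlongrightarrow> ?f 0) (at_right (0::real))"
    by (rule Lim_transform_eventually)
  then have "?f 0 = 0" using tendsto_unique[OF trivial_limit_at_right_real] tendsto_const by (metis)
  then show ?thesis by simp
qed

lemma powser_unique:
  shows "entire a \<Longrightarrow> (\<And>t. t > 0 \<Longrightarrow> (\<Sum>n. a n * complex_of_real t ^ n) = 0) \<Longrightarrow> a k = 0"
proof (induction k arbitrary: a)
  case 0 then show ?case by (rule powser_unique0)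
next
  case (Suc k)
  let ?b = "\<lambda>n. a (Suc n)"
  have eb: "entire ?b" using Suc.prems(1) unfolding entire_def by (auto intro: powser_split_head(3))
  have a0: "a 0 = 0" using powser_unique0 Suc.prems by blast
  have "(\<Sum>n. ?b n * complex_of_real t ^ n) = 0" if t: "t > 0" for t
  proof -
    have "(\<Sum>n. ?b n * complex_of_real t ^ n) * complex_of_real t = 0"
      using powser_split_head(2)[of a "complex_of_real t"] Suc.prems t a0 unfolding entire_def by simp
    then show ?thesis using t by simp
  qed
  from Suc.IH[of ?b, OF eb this] show ?case by simp
qed



lemma count_inj:
  assumes "inj_on lam {..<r}" "l' < (r::nat)"
  shows "(\<Sum>l<r. if lam l = lam l' then mul l else (0::nat)) = mul l'"
proof -
  have "(\<Sum>l<r. if lam l = lam l' then mul l else (0::nat)) = (\<Sum>l<r. if l = l' then mul l else 0)"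
    using assms by (intro sum.cong) (auto dest: inj_onD)
  also have "\<dots> = mul l'" using assms(2) by (subst sum.delta[OF finite_lessThan]) simp
  finally show ?thesis .
qed

lemma count_out:
  assumes "v \<notin> lam ` {..<(r::nat)}"
  shows "(\<Sum>l<r. if lam l = v then mul l else (0::nat)) = 0"
  using assms by (intro sum.neutral) auto

theorem mainTheorem19:
  fixes \<alpha> :: real and r :: nat and lam :: "nat \<Rightarrow> complex" and mul :: "nat \<Rightarrow> nat"
    and J :: nat and \<beta> :: "nat \<Rightarrow> complex" and \<mu> :: complex
    and c :: "nat \<Rightarrow> complex"
  assumes "0 < \<alpha>" "\<alpha> < 1"
    and "r \<ge> 1"
    and "inj_on lam {..<r}"
    and "\<forall>l<r. mul l \<ge> 1"
    and "ps_conv c"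
    and "\<forall>t\<ge>0. ps_fun (LD_poly \<alpha> lam mul r c) t =
            (\<Sum>j\<le>J. \<beta> j * complex_of_real t ^ j * Ealpha_deriv \<alpha> j (\<mu> * complex_of_real t))"
  shows "((\<forall>l<r. \<mu> \<noteq> lam l) \<longrightarrow>
          (\<exists>a :: nat \<Rightarrow> nat \<Rightarrow> complex. \<exists>b :: nat \<Rightarrow> complex. \<forall>t\<ge>0.
             ps_fun c t =
               (\<Sum>l<r. \<Sum>k<mul l. a l k * complex_of_real t ^ k
                    * Ealpha_deriv \<alpha> k (lam l * complex_of_real t))
             + (\<Sum>j\<le>J. b j * complex_of_real t ^ j
                    * Ealpha_deriv \<alpha> j (\<mu> * complex_of_real t))))
       \<and> (\<forall>l0<r. \<mu> = lam l0 \<longrightarrow>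
          (\<exists>a :: nat \<Rightarrow> nat \<Rightarrow> complex. \<exists>b :: nat \<Rightarrow> complex. \<forall>t\<ge>0.
             ps_fun c t =
               (\<Sum>l\<in>{..<r} - {l0}. \<Sum>k<mul l. a l k * complex_of_real t ^ k
                    * Ealpha_deriv \<alpha> k (lam l * complex_of_real t))
             + (\<Sum>k\<le>J + mul l0. b k * complex_of_real t ^ k
                    * Ealpha_deriv \<alpha> k (lam l0 * complex_of_real t))))"
proof -
  note a0 = assms(1) and a1 = assms(2) and inj = assms(4)
  define ec where "ec = (\<lambda>n. complex_of_real (Ecoef \<alpha> n))"
  define Ed where "Ed = (\<lambda>k. (deriv ^^ k) (\<lambda>s. \<Sum>n. ec n * s ^ n))"
  have EdE: "Ealpha_deriv \<alpha> = Ed"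
    unfolding Ed_def Ealpha_deriv_def ec_def by (intro ext) (simp add: Ealpha_def[abs_def])
  have ecnz: "ec n \<noteq> 0" for n unfolding ec_def using Ecoef_pos[OF a0 a1, of n] by simp
  have eE: "entire ec" unfolding ec_def by (rule entire_E[OF a0 a1])
  have ser: "(\<lambda>m. ec m * phi k v m * z ^ m) sums (z ^ k * Ed k (v * z))" for k v z
    by (rule series_phi[OF eE Ed_def])
  define d where "d = (\<lambda>n. c n / ec n)"
  have cd: "c = (\<lambda>n. ec n * d n)" unfolding d_def using ecnz by auto
  have entc: "entire c" unfolding entire_def
  proof
    fix z :: complex
    have "summable (\<lambda>n. c n * complex_of_real (norm z + 1) ^ n)"
      using assms(6) unfolding ps_conv_def by (metis add_nonneg_pos norm_ge_zero zero_less_one order_less_imp_le)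
    then show "summable (\<lambda>n. c n * z ^ n)" by (rule powser_inside) simp
  qed
  define F where "F = (\<lambda>n. ec n * (\<Sum>j\<le>J. \<beta> j * phi j \<mu> n))"
  have Fsums: "(\<lambda>n. F n * z ^ n) sums (\<Sum>j\<le>J. \<beta> j * (z ^ j * Ed j (\<mu> * z)))" for z
  proof -
    have "(\<lambda>n. \<Sum>j\<le>J. \<beta> j * (ec n * phi j \<mu> n * z ^ n)) sums (\<Sum>j\<le>J. \<beta> j * (z ^ j * Ed j (\<mu> * z)))"
      by (intro sums_sum sums_mult ser)
    moreover have "(\<lambda>n. \<Sum>j\<le>J. \<beta> j * (ec n * phi j \<mu> n * z ^ n)) = (\<lambda>n. F n * z ^ n)"
      unfolding F_def by (simp add: sum_distrib_left sum_distrib_right algebra_simps)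
    ultimately show ?thesis by simp
  qed
  have entF: "entire F" unfolding entire_def using Fsums sums_summable by blast
  define L where "L = LD_poly \<alpha> lam mul r c"
  have entL: "entire L" unfolding L_def LD_poly_def by (rule entire_LD_foldr[OF a0 a1 entc])
  define a where "a = (\<lambda>n. L n - F n)"
  have enta: "entire a" unfolding entire_def a_def
  proof
    fix z :: complex
    have "summable (\<lambda>n. L n * z ^ n - F n * z ^ n)"
      using entL entF unfolding entire_def by (intro summable_diff) auto
    then show "summable (\<lambda>n. (L n - F n) * z ^ n)" by (simp add: algebra_simps)
  qed
  have "a k = 0" for k
  proof (rule powser_unique[OF enta])
    fix t :: real assume t: "t > 0"
    have "ps_fun L t = (\<Sum>j\<le>J. \<beta> j * complex_of_real t ^ j * Ealpha_deriv \<alpha> j (\<mu> * complex_of_real t))"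
      using assms(7) t unfolding L_def by simp
    also have "\<dots> = (\<Sum>n. F n * complex_of_real t ^ n)"
      using sums_unique[OF Fsums[of "complex_of_real t"]] unfolding EdE by (simp add: mult.assoc)
    finally have "(\<Sum>n. L n * complex_of_real t ^ n) - (\<Sum>n. F n * complex_of_real t ^ n) = 0"
      unfolding ps_fun_def by simp
    then show "(\<Sum>n. a n * complex_of_real t ^ n) = 0"
      unfolding a_def using entL entF unfolding entire_def
      by (subst (asm) suminf_diff) (auto simp: algebra_simps)
  qed
  then have LF: "L = F" unfolding a_def by (auto simp: fun_eq_iff)
  have "L = (\<lambda>n. ec n * PP lam mul [0..<r] d n)"
    unfolding L_def LD_poly_def cd ec_def by (rule LD_foldr_conj[OF a0 a1])
  then have PPd: "PP lam mul [0..<r] d = (\<lambda>n. \<Sum>j\<le>J. \<beta> j * phi j \<mu> n)"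
    using LF ecnz unfolding F_def by (auto simp: fun_eq_iff)
  define S where "S = insert \<mu> (lam ` {..<r})"
  have finS: "finite S" unfolding S_def by simp
  define M0 where "M0 = (\<lambda>v. if v = \<mu> then Suc J else 0)"
  have "InSp S M0 (PP lam mul [0..<r] d)"
    unfolding InSp_def PPd
  proof (intro exI[of _ "\<lambda>v k. \<beta> k"] ext)
    fix n
    have "(\<Sum>v\<in>S. \<Sum>k<M0 v. \<beta> k * phi k v n) = (\<Sum>v\<in>S. if v = \<mu> then (\<Sum>k<Suc J. \<beta> k * phi k \<mu> n) else 0)"
      unfolding M0_def by (intro sum.cong) auto
    also have "\<dots> = (\<Sum>k<Suc J. \<beta> k * phi k \<mu> n)" using finS unfolding S_def by simp
    finally show "(\<Sum>j\<le>J. \<beta> j * phi j \<mu> n) = (\<Sum>v\<in>S. \<Sum>k<M0 v. \<beta> k * phi k v n)"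
      by (simp add: lessThan_Suc_atMost)
  qed
  from key_list[OF finS _ this]
  have "InSp S (\<lambda>v. M0 v + sum_list (map (\<lambda>l. if lam l = v then mul l else 0) [0..<r])) d"
    unfolding S_def by auto
  moreover have "sum_list (map (\<lambda>l. if lam l = v then mul l else 0) [0..<r]) = (\<Sum>l<r. if lam l = v then mul l else 0)" for v
    by (simp add: interv_sum_list_conv_sum_set_nat atLeast0LessThan)
  ultimately have "InSp S (\<lambda>v. M0 v + (\<Sum>l<r. if lam l = v then mul l else 0)) d" by simp
  then obtain A where A: "d = (\<lambda>n. \<Sum>v\<in>S. \<Sum>k<M0 v + (\<Sum>l<r. if lam l = v then mul l else 0). A v k * phi k v n)"
    unfolding InSp_def by blast
  define Mf where "Mf = (\<lambda>v. M0 v + (\<Sum>l<r. if lam l = v then mul l else 0))"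
  have psc: "ps_fun c t = (\<Sum>v\<in>S. \<Sum>k<Mf v. A v k * (complex_of_real t ^ k * Ed k (v * complex_of_real t)))" for t
  proof -
    let ?z = "complex_of_real t"
    have "(\<lambda>n. \<Sum>v\<in>S. \<Sum>k<Mf v. A v k * (ec n * phi k v n * ?z ^ n)) sums
        (\<Sum>v\<in>S. \<Sum>k<Mf v. A v k * (?z ^ k * Ed k (v * ?z)))"
      by (intro sums_sum sums_mult ser)
    moreover have "(\<lambda>n. \<Sum>v\<in>S. \<Sum>k<Mf v. A v k * (ec n * phi k v n * ?z ^ n)) = (\<lambda>n. c n * ?z ^ n)"
      unfolding cd A Mf_def by (simp add: sum_distrib_left sum_distrib_right algebra_simps)
    ultimately show ?thesis unfolding ps_fun_def by (simp add: sums_unique[symmetric])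
  qed
  have Mf_lam: "Mf (lam l) = (if lam l = \<mu> then Suc J else 0) + mul l" if "l < r" for l
    unfolding Mf_def M0_def using count_inj[OF inj that, of mul] by simp
  have inj': "inj_on lam {..<r}" by (rule inj)
  show ?thesis
  proof (intro conjI impI allI)
    assume nm: "\<forall>l<r. \<mu> \<noteq> lam l"
    then have mu_out: "\<mu> \<notin> lam ` {..<r}" by auto
    have Mf_mu: "Mf \<mu> = Suc J" unfolding Mf_def M0_def using count_out[OF mu_out, of mul] by simp
    show "\<exists>a b. \<forall>t\<ge>0. ps_fun c t =
               (\<Sum>l<r. \<Sum>k<mul l. a l k * complex_of_real t ^ k * Ealpha_deriv \<alpha> k (lam l * complex_of_real t))
             + (\<Sum>j\<le>J. b j * complex_of_real t ^ j * Ealpha_deriv \<alpha> j (\<mu> * complex_of_real t))"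
    proof (intro exI allI impI)
      fix t :: real
      let ?H = "\<lambda>v. \<Sum>k<Mf v. A v k * (complex_of_real t ^ k * Ed k (v * complex_of_real t))"
      have "ps_fun c t = ?H \<mu> + (\<Sum>v\<in>lam ` {..<r}. ?H v)"
        unfolding psc S_def using mu_out by simp
      also have "(\<Sum>v\<in>lam ` {..<r}. ?H v) = (\<Sum>l<r. ?H (lam l))"
        by (rule sum.reindex[OF inj', unfolded comp_def])
      also have "\<dots> = (\<Sum>l<r. \<Sum>k<mul l. A (lam l) k * complex_of_real t ^ k * Ealpha_deriv \<alpha> k (lam l * complex_of_real t))"
        using Mf_lam nm unfolding EdE by (intro sum.cong) (auto simp: mult.assoc)
      also have "?H \<mu> = (\<Sum>j\<le>J. A \<mu> j * complex_of_real t ^ j * Ealpha_deriv \<alpha> j (\<mu> * complex_of_real t))"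
        unfolding Mf_mu EdE lessThan_Suc_atMost by (simp add: mult.assoc)
      finally show "ps_fun c t =
               (\<Sum>l<r. \<Sum>k<mul l. A (lam l) k * complex_of_real t ^ k * Ealpha_deriv \<alpha> k (lam l * complex_of_real t))
             + (\<Sum>j\<le>J. A \<mu> j * complex_of_real t ^ j * Ealpha_deriv \<alpha> j (\<mu> * complex_of_real t))"
        by (simp add: add.commute)
    qed
  next
    fix l0 assume l0: "l0 < r" and mu: "\<mu> = lam l0"
    have SS': "S = lam ` {..<r}" unfolding S_def using l0 mu by auto
    show "\<exists>a b. \<forall>t\<ge>0. ps_fun c t =
               (\<Sum>l\<in>{..<r} - {l0}. \<Sum>k<mul l. a l k * complex_of_real t ^ k * Ealpha_deriv \<alpha> k (lam l * complex_of_real t))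
             + (\<Sum>k\<le>J + mul l0. b k * complex_of_real t ^ k * Ealpha_deriv \<alpha> k (lam l0 * complex_of_real t))"
    proof (intro exI allI impI)
      fix t :: real
      let ?H = "\<lambda>v. \<Sum>k<Mf v. A v k * (complex_of_real t ^ k * Ed k (v * complex_of_real t))"
      have "ps_fun c t = (\<Sum>v\<in>lam ` {..<r}. ?H v)"
        unfolding psc SS' by simp
      also have "\<dots> = (\<Sum>l<r. ?H (lam l))"
        by (rule sum.reindex[OF inj', unfolded comp_def])
      also have "\<dots> = ?H (lam l0) + (\<Sum>l\<in>{..<r} - {l0}. ?H (lam l))"
        using l0 by (intro sum.remove) auto
      also have "(\<Sum>l\<in>{..<r} - {l0}. ?H (lam l)) = (\<Sum>l\<in>{..<r} - {l0}. \<Sum>k<mul l. A (lam l) k * complex_of_real t ^ k * Ealpha_deriv \<alpha> k (lam l * complex_of_real t))"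
      proof (rule sum.cong[OF refl])
        fix l assume l: "l \<in> {..<r} - {l0}"
        then have "lam l \<noteq> \<mu>" using mu l0 inj by (auto dest: inj_onD)
        then show "?H (lam l) = (\<Sum>k<mul l. A (lam l) k * complex_of_real t ^ k * Ealpha_deriv \<alpha> k (lam l * complex_of_real t))"
          using Mf_lam[of l] l unfolding EdE by (simp add: mult.assoc)
      qed
      also have "?H (lam l0) = (\<Sum>k\<le>J + mul l0. A (lam l0) k * complex_of_real t ^ k * Ealpha_deriv \<alpha> k (lam l0 * complex_of_real t))"
      proof -
        have m: "Mf (lam l0) = Suc (J + mul l0)" using Mf_lam[OF l0] mu by simp
        show ?thesis unfolding EdE by (simp only: m lessThan_Suc_atMost) (simp add: mult.assoc)
      qed
      finally show "ps_fun c t =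
               (\<Sum>l\<in>{..<r} - {l0}. \<Sum>k<mul l. A (lam l) k * complex_of_real t ^ k * Ealpha_deriv \<alpha> k (lam l * complex_of_real t))
             + (\<Sum>k\<le>J + mul l0. A (lam l0) k * complex_of_real t ^ k * Ealpha_deriv \<alpha> k (lam l0 * complex_of_real t))"
        by (simp add: add.commute)
    qed
  qed
qed

end
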